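(* Let $H_0,H_1$ be complex Hilbert spaces, $G$ a densely defined closed operator from $H_0$ into $H_1$ and $D$ a densely defined closed operator from $H_1$ into $H_0$ with $-G^*\subset D$, and let $\mathring G=-D^*$. Let $m\in\mathcal L(H_0)$ and let $a\in\mathcal L(H_1)$ be coercive. Let $\mathring T\in\mathcal L(\mathrm{dom}(\mathring G))$ be defined by $(\mathring Tu,v)_{\mathrm{dom}(\mathring G)}=(aGu,Gv)_{H_1}+(mu,v)_{H_0}$ for all $u,v\in\mathrm{dom}(\mathring G)$. If the inclusion $\tau\colon\mathrm{dom}(\mathring G)\to H_0$ is compact, then $\mathring T$ has closed range.
   Context: $\mathrm{dom}(\mathring G)$ carries the graph inner product $(u,v)_{\mathrm{dom}(\mathring G)}=(u,v)_{H_0}+(\mathring Gu,\mathring Gv)_{H_1}$; note $\mathring G\subset G$. Coercive: $\mathrm{Re}(ax,x)\ge\mu\|x\|^2$ for some $\mu>0$ and all $x$. *)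

theory Defs
  imports "HOL-Analysis.Analysis"
begin

class complex_vector = real_vector +
  fixes scaleC :: "complex \<Rightarrow> 'a \<Rightarrow> 'a"
  assumes scaleC_add_right: "scaleC c (x + y) = scaleC c x + scaleC c y"
    and scaleC_add_left: "scaleC (b + c) x = scaleC b x + scaleC c x"
    and scaleC_scaleC: "scaleC b (scaleC c x) = scaleC (b * c) x"
    and scaleC_one: "scaleC 1 x = x"
    and scaleR_scaleC: "scaleR r x = scaleC (complex_of_real r) x"

class complex_inner = real_normed_vector + complex_vector +
  fixes cinner :: "'a \<Rightarrow> 'a \<Rightarrow> complex"
  assumes cinner_add_left: "cinner (x + y) z = cinner x z + cinner y z"
    and cinner_scaleC_left: "cinner (scaleC c x) y = c * cinner x y"
    and cinner_commute: "cinner x y = cnj (cinner y x)"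
    and cinner_self_nonneg: "0 \<le> Re (cinner x x)"
    and norm_eq_sqrt_cinner: "norm x = sqrt (Re (cinner x x))"

class chilbert_space = complex_inner + complete_space

definition clinear :: "('a::complex_vector \<Rightarrow> 'b::complex_vector) \<Rightarrow> bool" where
  "clinear f \<longleftrightarrow> (\<forall>x y. f (x + y) = f x + f y) \<and> (\<forall>c x. f (scaleC c x) = scaleC c (f x))"

definition bounded_clinear :: "('a::complex_inner \<Rightarrow> 'b::complex_inner) \<Rightarrow> bool" where
  "bounded_clinear f \<longleftrightarrow> clinear f \<and> (\<exists>K. \<forall>x. norm (f x) \<le> norm x * K)"

definition csubspace :: "'a::complex_vector set \<Rightarrow> bool" where
  "csubspace S \<longleftrightarrow> 0 \<in> S \<and> (\<forall>x\<in>S. \<forall>y\<in>S. x + y \<in> S) \<and> (\<forall>c. \<forall>x\<in>S. scaleC c x \<in> S)"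

text \<open>A (possibly unbounded) linear operator, given by its domain and its action on it.\<close>
definition lin_op :: "'a::complex_vector set \<Rightarrow> ('a \<Rightarrow> 'b::complex_vector) \<Rightarrow> bool" where
  "lin_op S A \<longleftrightarrow> csubspace S \<and>
     (\<forall>x\<in>S. \<forall>y\<in>S. A (x + y) = A x + A y) \<and> (\<forall>c. \<forall>x\<in>S. A (scaleC c x) = scaleC c (A x))"

definition densely_defined :: "'a::{complex_vector,topological_space} set \<Rightarrow> ('a \<Rightarrow> 'b::complex_vector) \<Rightarrow> bool" where
  "densely_defined S A \<longleftrightarrow> lin_op S A \<and> closure S = UNIV"

definition closed_op :: "'a::{complex_vector,topological_space} set \<Rightarrow> ('a \<Rightarrow> 'b::{complex_vector,topological_space}) \<Rightarrow> bool" where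
  "closed_op S A \<longleftrightarrow> lin_op S A \<and> closed {(x, A x) | x. x \<in> S}"

definition adj_dom :: "'a::complex_inner set \<Rightarrow> ('a \<Rightarrow> 'b::complex_inner) \<Rightarrow> 'b set" where
  "adj_dom S A = {y. \<exists>z. \<forall>x\<in>S. cinner (A x) y = cinner x z}"

definition adj :: "'a::complex_inner set \<Rightarrow> ('a \<Rightarrow> 'b::complex_inner) \<Rightarrow> 'b \<Rightarrow> 'a" where
  "adj S A y = (THE z. \<forall>x\<in>S. cinner (A x) y = cinner x z)"

end

theory Submission imports Defs begin

lemma cinner_zero_left[simp]: "cinner 0 (y::'a::complex_inner) = 0"
  using cinner_add_left[of 0 0 y] by simp

lemma cinner_add_right: "cinner (x::'a::complex_inner) (y + z) = cinner x y + cinner x z"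
proof -
  have "cinner x (y+z) = cnj (cinner (y+z) x)" by (rule cinner_commute)
  also have "\<dots> = cnj (cinner y x) + cnj (cinner z x)" by (simp add: cinner_add_left)
  also have "\<dots> = cinner x y + cinner x z" using cinner_commute[of x y] cinner_commute[of x z] by simp
  finally show ?thesis .
qed

lemma cinner_zero_right[simp]: "cinner (x::'a::complex_inner) 0 = 0"
  using cinner_add_right[of x 0 0] by simp

lemma cinner_scaleC_right: "cinner (x::'a::complex_inner) (scaleC c y) = cnj c * cinner x y"
proof -
  have "cinner x (scaleC c y) = cnj (cinner (scaleC c y) x)" by (rule cinner_commute)
  also have "\<dots> = cnj c * cnj (cinner y x)" by (simp add: cinner_scaleC_left)
  also have "\<dots> = cnj c * cinner x y" using cinner_commute[of x y] by simp
  finally show ?thesis .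
qed

lemma cinner_minus_left: "cinner (- x::'a::complex_inner) y = - cinner x y"
  using cinner_add_left[of x "-x" y] by (simp add: add_eq_0_iff)

lemma cinner_minus_right: "cinner (x::'a::complex_inner) (- y) = - cinner x y"
  using cinner_add_right[of x y "-y"] by (simp add: add_eq_0_iff)

lemma cinner_diff_left: "cinner (x - y::'a::complex_inner) z = cinner x z - cinner y z"
  using cinner_add_left[of x "-y" z] by (simp add: cinner_minus_left)

lemma cinner_diff_right: "cinner (x::'a::complex_inner) (y - z) = cinner x y - cinner x z"
  using cinner_add_right[of x y "-z"] by (simp add: cinner_minus_right)

lemma cinner_scaleR_left: "cinner (scaleR r x::'a::complex_inner) y = of_real r * cinner x y"
  by (simp add: scaleR_scaleC cinner_scaleC_left)

lemma cinner_scaleR_right: "cinner (x::'a::complex_inner) (scaleR r y) = of_real r * cinner x y"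
  by (simp add: scaleR_scaleC cinner_scaleC_right)

lemma Im_cinner_self[simp]: "Im (cinner (x::'a::complex_inner) x) = 0"
proof -
  have "Im (cinner x x) = Im (cnj (cinner x x))" using cinner_commute[of x x] by simp
  then show ?thesis by simp
qed

lemma Re_cinner_commute: "Re (cinner (y::'a::complex_inner) x) = Re (cinner x y)"
  using cinner_commute[of y x] by simp

lemma norm_sq_cinner: "(norm (x::'a::complex_inner))^2 = Re (cinner x x)"
  by (simp add: norm_eq_sqrt_cinner cinner_self_nonneg)

lemma cinner_self_eq: "cinner (x::'a::complex_inner) x = of_real ((norm x)^2)"
  by (simp add: norm_sq_cinner complex_eq_iff)


lemma norm_add_sq: "(norm (x + y::'a::complex_inner))^2 = (norm x)^2 + (norm y)^2 + 2 * Re (cinner x y)"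
  using Re_cinner_commute[of y x] by (simp add: norm_sq_cinner cinner_add_left cinner_add_right)

lemma norm_diff_sq: "(norm (x - y::'a::complex_inner))^2 = (norm x)^2 + (norm y)^2 - 2 * Re (cinner x y)"
  using norm_add_sq[of x "-y"] by (simp add: cinner_minus_right)

lemma Re_cinner_le: "Re (cinner (x::'a::complex_inner) y) \<le> norm x * norm y"
proof -
  have "(norm (x+y))^2 \<le> (norm x + norm y)^2"
    by (simp add: norm_triangle_ineq power_mono)
  then have "(norm x)^2 + (norm y)^2 + 2 * Re (cinner x y) \<le> (norm x + norm y)^2"
    by (simp only: norm_add_sq)
  then show ?thesis by (simp add: power2_eq_square algebra_simps)
qed

lemma norm_scaleC: "norm (scaleC c (x::'a::complex_inner)) = cmod c * norm x"
proof -
  have "(norm (scaleC c x))^2 = Re (c * cnj c * cinner x x)"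
    by (simp add: norm_sq_cinner cinner_scaleC_left cinner_scaleC_right mult.assoc)
  also have "c * cnj c = of_real ((cmod c)^2)" by (rule complex_norm_square[symmetric])
  then have "c * cnj c * cinner x x = of_real ((cmod c)^2 * (norm x)^2)"
    by (simp add: cinner_self_eq)
  finally have "(norm (scaleC c x))^2 = (cmod c * norm x)^2" by (simp add: power_mult_distrib)
  then show ?thesis
    by (metis norm_ge_zero power2_eq_imp_eq zero_le_mult_iff)
qed

lemma cinner_cs: "cmod (cinner (x::'a::complex_inner) y) \<le> norm x * norm y"
proof (cases "cinner x y = 0")
  case True then show ?thesis by simp
next
  case False
  define c where "c = cnj (cinner x y) / of_real (cmod (cinner x y))"
  have cm: "cmod c = 1" using False by (simp add: c_def norm_divide)
  have "c * cinner x y = cnj (cinner x y) * cinner x y / of_real (cmod (cinner x y))"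
    by (simp add: c_def)
  also have "\<dots> = of_real (cmod (cinner x y))"
  proof -
    have "cnj (cinner x y) * cinner x y = of_real ((cmod (cinner x y))^2)"
      by (subst mult.commute) (rule complex_norm_square[symmetric])
    then show ?thesis using False by (simp add: power2_eq_square)
  qed
  finally have "cinner (scaleC c x) y = of_real (cmod (cinner x y))"
    by (simp add: cinner_scaleC_left)
  then have "cmod (cinner x y) = Re (cinner (scaleC c x) y)" by simp
  also have "\<dots> \<le> norm x * norm y" using Re_cinner_le[of "scaleC c x" y] cm by (simp add: norm_scaleC)
  finally show ?thesis .
qed


lemma bb_cinner: "bounded_bilinear (cinner :: 'a::complex_inner \<Rightarrow> 'a \<Rightarrow> complex)"
proof
  fix a a' b b' :: 'a and r :: real
  show "cinner (a + a') b = cinner a b + cinner a' b" by (rule cinner_add_left)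
  show "cinner a (b + b') = cinner a b + cinner a b'" by (rule cinner_add_right)
  show "cinner (scaleR r a) b = scaleR r (cinner a b)" by (simp add: cinner_scaleR_left scaleR_conv_of_real)
  show "cinner a (scaleR r b) = scaleR r (cinner a b)" by (simp add: cinner_scaleR_right scaleR_conv_of_real)
next
  show "\<exists>K. \<forall>a b::'a. norm (cinner a b) \<le> norm a * norm b * K"
    by (rule exI[of _ 1]) (simp add: cinner_cs)
qed

lemma tendsto_cinner: "(f \<longlongrightarrow> a) F \<Longrightarrow> (g \<longlongrightarrow> b) F \<Longrightarrow> ((\<lambda>x. cinner (f x) (g x) :: complex) \<longlongrightarrow> cinner a b) F"
  by (rule bounded_bilinear.tendsto[OF bb_cinner])

lemma cinner_self_zero: "cinner (z::'a::complex_inner) z = 0 \<longleftrightarrow> z = 0"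
  by (simp add: cinner_self_eq)

lemma dense_zero:
  fixes z :: "'a::complex_inner"
  assumes "closure S = UNIV" "\<forall>x\<in>S. cinner x z = 0" shows "z = 0"
proof -
  have cont: "continuous_on UNIV (\<lambda>x. cinner x z)"
    unfolding continuous_on_def by (auto intro!: tendsto_cinner tendsto_ident_at tendsto_const)
  have "closed {x. cinner x z = 0}"
    by (rule closed_Collect_eq[OF cont continuous_on_const])
  moreover have "S \<subseteq> {x. cinner x z = 0}" using assms(2) by auto
  ultimately have "closure S \<subseteq> {x. cinner x z = 0}" by (rule closure_minimal[rotated])
  then have "cinner z z = 0" using assms(1) by auto
  then show ?thesis by (simp add: cinner_self_zero)
qed

lemma adj_unique:
  fixes z1 :: "'a::complex_inner"
  assumes "closure S = UNIV" "\<forall>x\<in>S. cinner x z1 = cinner x z2" shows "z1 = z2"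
  using dense_zero[OF assms(1), of "z1 - z2"] assms(2) by (simp add: cinner_diff_right)

lemma adj_prop:
  assumes "closure S = UNIV" "y \<in> adj_dom S A"
  shows "\<forall>x\<in>S. cinner (A x) y = cinner x (adj S A y)"
proof -
  obtain z where z: "\<forall>x\<in>S. cinner (A x) y = cinner x z" using assms(2) by (auto simp: adj_dom_def)
  have "\<forall>x\<in>S. cinner (A x) y = cinner x (THE z. \<forall>x\<in>S. cinner (A x) y = cinner x z)"
  proof (rule theI2[of _ z])
    show "\<forall>x\<in>S. cinner (A x) y = cinner x z" by (rule z)
    fix z' assume "\<forall>x\<in>S. cinner (A x) y = cinner x z'"
    then show "z' = z" using z by (intro adj_unique[OF assms(1)]) auto
  qed
  then show ?thesis by (simp add: adj_def)
qed

lemma adj_eqI: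
  assumes "closure S = UNIV" "\<forall>x\<in>S. cinner (A x) y = cinner x z"
  shows "y \<in> adj_dom S A \<and> adj S A y = z"
proof
  show yd: "y \<in> adj_dom S A" using assms(2) by (auto simp: adj_dom_def)
  show "adj S A y = z" using adj_prop[OF assms(1) yd] assms(2) by (intro adj_unique[OF assms(1)]) auto
qed

lemma adj_closed_seq:
  assumes "closure S = UNIV" "\<forall>n. y n \<in> adj_dom S A" "y \<longlonglongrightarrow> y0" "(\<lambda>n. adj S A (y n)) \<longlonglongrightarrow> z"
  shows "y0 \<in> adj_dom S A \<and> adj S A y0 = z"
proof (rule adj_eqI[OF assms(1)], intro ballI)
  fix x assume x: "x \<in> S"
  have "(\<lambda>n. cinner (A x) (y n)) \<longlonglongrightarrow> cinner (A x) y0" by (intro tendsto_cinner tendsto_const assms(3))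
  moreover have "(\<lambda>n. cinner (A x) (y n)) = (\<lambda>n. cinner x (adj S A (y n)))"
    using adj_prop[OF assms(1)] assms(2) x by auto
  moreover have "(\<lambda>n. cinner x (adj S A (y n))) \<longlonglongrightarrow> cinner x z" by (intro tendsto_cinner tendsto_const assms(4))
  ultimately show "cinner (A x) y0 = cinner x z" using LIMSEQ_unique by metis
qed

lemma adj_add:
  assumes "closure S = UNIV" "y1 \<in> adj_dom S A" "y2 \<in> adj_dom S A"
  shows "y1 + y2 \<in> adj_dom S A \<and> adj S A (y1 + y2) = adj S A y1 + adj S A y2"
  using adj_prop[OF assms(1,2)] adj_prop[OF assms(1,3)]
  by (intro adj_eqI[OF assms(1)]) (simp add: cinner_add_right)

lemma adj_scaleC:
  assumes "closure S = UNIV" "y \<in> adj_dom S A"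
  shows "scaleC c y \<in> adj_dom S A \<and> adj S A (scaleC c y) = scaleC c (adj S A y)"
  using adj_prop[OF assms(1,2)]
  by (intro adj_eqI[OF assms(1)]) (simp add: cinner_scaleC_right)

lemma adj_scaleR:
  assumes "closure S = UNIV" "y \<in> adj_dom S A"
  shows "scaleR r y \<in> adj_dom S A \<and> adj S A (scaleR r y) = scaleR r (adj S A y)"
  using adj_scaleC[OF assms, of "of_real r"] by (simp add: scaleR_scaleC)

lemma adj_minus:
  assumes "closure S = UNIV" "y \<in> adj_dom S A"
  shows "- y \<in> adj_dom S A \<and> adj S A (- y) = - adj S A y"
  using adj_scaleR[OF assms, of "-1"] by simp

lemma adj_diff:
  assumes "closure S = UNIV" "y1 \<in> adj_dom S A" "y2 \<in> adj_dom S A"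
  shows "y1 - y2 \<in> adj_dom S A \<and> adj S A (y1 - y2) = adj S A y1 - adj S A y2"
  using adj_add[OF assms(1,2) adj_minus[OF assms(1,3), THEN conjunct1]] adj_minus[OF assms(1,3)]
  by simp


lemma norm_Pair_sq: "(norm (a, b))^2 = (norm a)^2 + (norm b)^2"
  by (simp add: norm_Pair)

lemma parallelogram_ci: "(norm (x + y::'a::complex_inner))^2 + (norm (x - y))^2 = 2*(norm x)^2 + 2*(norm y)^2"
  by (simp add: norm_add_sq norm_diff_sq)

lemma parallelogram_prod:
  fixes x y :: "'a::complex_inner \<times> 'b::complex_inner"
  shows "(norm (x + y))^2 + (norm (x - y))^2 = 2*(norm x)^2 + 2*(norm y)^2"
proof -
  obtain a b where x: "x = (a, b)" by (cases x)
  obtain c d where y: "y = (c, d)" by (cases y)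
  show ?thesis unfolding x y
    using parallelogram_ci[of a c] parallelogram_ci[of b d] by (simp add: norm_Pair_sq)
qed

lemma min_norm_exists:
  fixes C :: "'a::{real_normed_vector,complete_space} set"
  assumes par: "\<And>x y::'a. (norm (x+y))^2 + (norm (x-y))^2 = 2*(norm x)^2 + 2*(norm y)^2"
    and ne: "C \<noteq> {}" and cl: "closed C" and conv: "\<And>x y. x\<in>C \<Longrightarrow> y\<in>C \<Longrightarrow> scaleR (1/2) (x+y) \<in> C"
  shows "\<exists>c\<in>C. \<forall>x\<in>C. norm c \<le> norm x"
proof -
  define d where "d = Inf (norm ` C)"
  have bdd: "bdd_below (norm ` C)" by (rule bdd_belowI[of _ 0]) auto
  have dle: "d \<le> norm x" if "x \<in> C" for x
    unfolding d_def using bdd that by (simp add: cInf_lower)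
  have d0: "0 \<le> d" unfolding d_def using ne by (auto intro!: cInf_greatest)
  have "\<exists>x\<in>C. norm x < d + 1/(real n+1)" for n
  proof -
    have "Inf (norm ` C) < d + 1/(real n+1)" by (simp add: d_def)
    then show ?thesis using ne by (subst (asm) cInf_less_iff[OF _ bdd]) auto
  qed
  then obtain x where xC: "\<And>n. x n \<in> C" and xd: "\<And>n. norm (x n) < d + 1/(real n+1)"
    by metis
  define e where "e n = 1/(real n+1)" for n
  have e01: "0 < e n" "e n \<le> 1" for n by (auto simp: e_def)
  have xsq: "(norm (x n))^2 \<le> d^2 + (2*d+1) * e n" for n
  proof -
    have "norm (x n) \<le> d + e n" using xd[of n] by (simp add: e_def)
    then have "(norm (x n))^2 \<le> (d + e n)^2" by (simp add: power_mono)
    also have "\<dots> = d^2 + 2*d*e n + e n * e n" by (simp add: power2_eq_square algebra_simps)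
    also have "e n * e n \<le> e n" using e01[of n] by (simp add: mult_le_cancel_right1)
    then have "d^2 + 2*d*e n + e n * e n \<le> d^2 + (2*d+1) * e n" by (simp add: algebra_simps)
    finally show ?thesis .
  qed
  have diffsq: "(norm (x m - x n))^2 \<le> 2*(2*d+1)*(e m + e n)" for m n
  proof -
    have "d \<le> norm (scaleR (1/2) (x m + x n))" by (rule dle[OF conv[OF xC xC]])
    then have "2*d \<le> norm (x m + x n)" by simp
    then have "(2*d)^2 \<le> (norm (x m + x n))^2" using d0 by (intro power_mono) auto
    then show ?thesis using par[of "x m" "x n"] xsq[of m] xsq[of n] by (simp add: algebra_simps power2_eq_square)
  qed
  have "Cauchy x"
  proof (rule metric_CauchyI)
    fix eps :: real assume eps: "eps > 0"
    obtain M :: nat where M: "4*(2*d+1)/eps^2 < real M" using reals_Archimedean2 by blast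
    have "dist (x m) (x n) < eps" if "m \<ge> M" "n \<ge> M" for m n
    proof -
      have em: "e m \<le> 1/(real M+1)" "e n \<le> 1/(real M+1)" using that
        by (simp_all add: e_def divide_simps)
      have "4*(2*d+1) < eps^2 * real M" using M eps by (simp add: field_simps)
      then have "4*(2*d+1) < eps^2 * (real M + 1)" using eps by (smt (verit) zero_less_power mult_less_cancel_left)
      then have "4*(2*d+1)/(real M+1) < eps^2" by (simp add: field_simps)
      moreover have "2*(2*d+1)*(e m + e n) \<le> 4*(2*d+1)/(real M+1)"
      proof -
        have "e m + e n \<le> 2/(real M+1)" using em by simp
        then have "2*(2*d+1)*(e m + e n) \<le> 2*(2*d+1)*(2/(real M+1))"
          using d0 by (intro mult_left_mono) auto
        then show ?thesis by simp
      qed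
      ultimately have "(norm (x m - x n))^2 < eps^2" using diffsq[of m n] by linarith
      then show ?thesis using eps by (simp add: dist_norm power_less_imp_less_base)
    qed
    then show "\<exists>M. \<forall>m\<ge>M. \<forall>n\<ge>M. dist (x m) (x n) < eps" by blast
  qed
  then obtain c where c: "x \<longlonglongrightarrow> c" using convergent_def Cauchy_convergent_iff by blast
  have cC: "c \<in> C" using closed_sequentially[OF cl] xC c by blast
  have "norm c \<le> norm y" if y: "y \<in> C" for y
  proof -
    have "(\<lambda>n. norm (x n)) \<longlonglongrightarrow> norm c" by (intro tendsto_norm c)
    moreover have "(\<lambda>n. norm y + e n) \<longlonglongrightarrow> norm y + 0"
    proof -
      have "e = (\<lambda>n. inverse (real (Suc n)))" by (auto simp: e_def inverse_eq_divide add.commute)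
      then have "e \<longlonglongrightarrow> 0" using LIMSEQ_inverse_real_of_nat by simp
      then show ?thesis by (intro tendsto_add tendsto_const)
    qed
    moreover have "\<forall>n. norm (x n) \<le> norm y + e n" using xd dle[OF y] by (smt (verit) e_def)
    ultimately show ?thesis by (intro LIMSEQ_le[of "\<lambda>n. norm (x n)" _ "\<lambda>n. norm y + e n"]) auto
  qed
  then show ?thesis using cC by blast
qed


lemma scaleC_minus1: "scaleC (-1) (x::'a::complex_vector) = - x"
  using scaleR_scaleC[of "-1" x] by simp

lemma lin_op_add:
  assumes "lin_op S A" "x \<in> S" "y \<in> S"
  shows "x + y \<in> S \<and> A (x + y) = A x + A y"
  using assms by (simp add: lin_op_def csubspace_def)

lemma lin_op_scaleC:
  assumes "lin_op S A" "x \<in> S"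
  shows "scaleC c x \<in> S \<and> A (scaleC c x) = scaleC c (A x)"
  using assms by (simp add: lin_op_def csubspace_def)

lemma lin_op_scaleR:
  assumes "lin_op S A" "x \<in> S"
  shows "scaleR r x \<in> S \<and> A (scaleR r x) = scaleR r (A x)"
  using lin_op_scaleC[OF assms, of "of_real r"] by (simp add: scaleR_scaleC)

lemma lin_op_diff:
  assumes "lin_op S A" "x \<in> S" "y \<in> S"
  shows "x - y \<in> S \<and> A (x - y) = A x - A y"
  using lin_op_add[OF assms(1,2) lin_op_scaleR[OF assms(1,3), of "-1", THEN conjunct1]]
    lin_op_scaleR[OF assms(1,3), of "-1"] by simp

lemma lin_op_zero:
  assumes "lin_op S A" shows "0 \<in> S"
  using assms by (simp add: lin_op_def csubspace_def)

lemma norm_add_scaleC_sq: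
  "(norm (a + scaleC t b::'a::complex_inner))^2 = (norm a)^2 + 2 * Re (cnj t * cinner a b) + (cmod t)^2 * (norm b)^2"
  by (simp add: norm_add_sq cinner_scaleC_right norm_scaleC power_mult_distrib)

lemma orth_from_min:
  fixes a b :: "'a::complex_inner" and c d :: "'b::complex_inner"
  assumes "\<And>t. (norm a)^2 + (norm c)^2 \<le> (norm (a + scaleC t b))^2 + (norm (c + scaleC t d))^2"
  shows "cinner a b + cinner c d = 0"
proof -
  define S where "S = cinner a b + cinner c d"
  define K where "K = (norm b)^2 + (norm d)^2"
  have K0: "K \<ge> 0" by (simp add: K_def)
  define t where "t = - S / of_real (K+1)"
  have "0 \<le> 2 * Re (cnj t * S) + (cmod t)^2 * K"
    using assms[of t] by (simp add: norm_add_scaleC_sq S_def K_def cinner_add_left algebra_simps distrib_left)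
  moreover have "cnj t * S = - of_real ((cmod S)^2 / (K+1))"
  proof -
    have "S * cnj S = of_real ((cmod S)^2)" by (rule complex_norm_square[symmetric])
    then show ?thesis using K0 by (simp add: t_def mult.commute)
  qed
  moreover have "(cmod t)^2 = (cmod S)^2 / (K+1)^2"
    using K0 by (simp add: t_def norm_divide power_divide)
  ultimately have "0 \<le> - 2 * ((cmod S)^2 / (K+1)) + (cmod S)^2 / (K+1)^2 * K" by simp
  moreover have "- 2 * ((cmod S)^2 / (K+1)) + (cmod S)^2 / (K+1)^2 * K
      = (- 2 * (cmod S)^2 * (K+1) + (cmod S)^2 * K) / (K+1)^2"
  proof -
    have "K + 1 > 0" using K0 by simp
    then show ?thesis by (simp add: diff_divide_distrib add_divide_distrib power2_eq_square)
  qed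
  ultimately have "0 \<le> (- 2 * (cmod S)^2 * (K+1) + (cmod S)^2 * K) / (K+1)^2" by simp
  then have "0 \<le> - 2 * (cmod S)^2 * (K+1) + (cmod S)^2 * K"
    using K0 by (simp add: zero_le_divide_iff)
  then have "(cmod S)^2 * (K + 2) \<le> 0" by (simp add: algebra_simps)
  then have "(cmod S)^2 \<le> 0" using K0 by (simp add: mult_le_0_iff)
  then show ?thesis by (simp add: S_def)
qed

lemma real_cs2:
  fixes a b c d :: real
  assumes "a \<ge> 0" "b \<ge> 0" "c \<ge> 0" "d \<ge> 0"
  shows "a*c + b*d \<le> sqrt (a^2+b^2) * sqrt (c^2+d^2)"
proof -
  have "(a^2+b^2)*(c^2+d^2) - (a*c+b*d)^2 = (a*d-b*c)^2" by (simp add: power2_eq_square algebra_simps)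
  then have "(a*c+b*d)^2 \<le> (a^2+b^2)*(c^2+d^2)" by (smt (verit) zero_le_power2)
  then have "a*c+b*d \<le> sqrt ((a^2+b^2)*(c^2+d^2))" by (rule real_le_rsqrt)
  then show ?thesis by (simp add: real_sqrt_mult)
qed

theorem lemma5p5:
  fixes domG :: "'h0::chilbert_space set" and G :: "'h0 \<Rightarrow> 'h1::chilbert_space"
    and domD :: "'h1 set" and D :: "'h1 \<Rightarrow> 'h0"
    and domGo :: "'h0 set" and Go :: "'h0 \<Rightarrow> 'h1"
    and m :: "'h0 \<Rightarrow> 'h0" and a :: "'h1 \<Rightarrow> 'h1" and T :: "'h0 \<Rightarrow> 'h0"
  assumes G_dense: "densely_defined domG G" and G_closed: "closed_op domG G"
    and D_dense: "densely_defined domD D" and D_closed: "closed_op domD D"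
    and adjG_sub_D: "adj_dom domG G \<subseteq> domD"
    and adjG_sub_D': "\<forall>y\<in>adj_dom domG G. D y = - adj domG G y"
    and Go_dom: "domGo = adj_dom domD D"
    and Go_def: "\<forall>u\<in>domGo. Go u = - adj domD D u"
    and m_bdd: "bounded_clinear m"
    and a_bdd: "bounded_clinear a"
    and a_coercive: "\<exists>\<mu>>0. \<forall>x. Re (cinner (a x) x) \<ge> \<mu> * (norm x)\<^sup>2"
    and T_maps: "T ` domGo \<subseteq> domGo"
    and T_bdd: "\<exists>K. \<forall>u\<in>domGo. (norm (T u))\<^sup>2 + (norm (Go (T u)))\<^sup>2 \<le> K * ((norm u)\<^sup>2 + (norm (Go u))\<^sup>2)"
    and T_def: "\<forall>u\<in>domGo. \<forall>v\<in>domGo.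
       cinner (T u) v + cinner (Go (T u)) (Go v) = cinner (a (G u)) (G v) + cinner (m u) v"
    and tau_compact: "compact (closure {u \<in> domGo. (norm u)\<^sup>2 + (norm (Go u))\<^sup>2 \<le> 1})"
  shows "\<forall>s y. (\<forall>n. s n \<in> T ` domGo) \<and> y \<in> domGo \<and> s \<longlonglongrightarrow> y \<and> (\<lambda>n. Go (s n)) \<longlonglongrightarrow> Go y
           \<longrightarrow> y \<in> T ` domGo"
proof -
  have dG: "closure domG = UNIV" and lG: "lin_op domG G" using G_dense by (auto simp: densely_defined_def)
  have dD: "closure domD = UNIV" and lD: "lin_op domD D" using D_dense by (auto simp: densely_defined_def)
  have Go_add: "u + v \<in> domGo \<and> Go (u + v) = Go u + Go v" if "u \<in> domGo" "v \<in> domGo" for u v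
  proof -
    have "u + v \<in> adj_dom domD D \<and> adj domD D (u + v) = adj domD D u + adj domD D v"
      using adj_add[OF dD] that Go_dom by auto
    then show ?thesis using Go_def Go_dom that by auto
  qed
  have Go_scaleR: "scaleR r u \<in> domGo \<and> Go (scaleR r u) = scaleR r (Go u)" if "u \<in> domGo" for u r
  proof -
    have "scaleR r u \<in> adj_dom domD D \<and> adj domD D (scaleR r u) = scaleR r (adj domD D u)"
      using adj_scaleR[OF dD] that Go_dom by auto
    then show ?thesis using Go_def Go_dom that by auto
  qed
  have Go_diff: "u - v \<in> domGo \<and> Go (u - v) = Go u - Go v" if "u \<in> domGo" "v \<in> domGo" for u v
  proof -
    have "u - v \<in> adj_dom domD D \<and> adj domD D (u - v) = adj domD D u - adj domD D v"
      using adj_diff[OF dD] that Go_dom by auto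
    then show ?thesis using Go_def Go_dom that by auto
  qed
  have Go_zero: "0 \<in> domGo"
    using adj_eqI[OF dD, of D 0 0] Go_dom by simp
  have Go_closed: "x \<in> domGo \<and> Go x = z"
    if X: "\<And>n. X n \<in> domGo" "X \<longlonglongrightarrow> x" "(\<lambda>n. Go (X n)) \<longlonglongrightarrow> z" for X x z
  proof -
    have "(\<lambda>n. adj domD D (X n)) = (\<lambda>n. - Go (X n))" using Go_def X(1) by auto
    then have "(\<lambda>n. adj domD D (X n)) \<longlonglongrightarrow> - z" using tendsto_minus[OF X(3)] by simp
    then have "x \<in> adj_dom domD D \<and> adj domD D x = - z"
      using adj_closed_seq[OF dD, of X D x "-z"] X Go_dom by auto
    then show ?thesis using Go_def Go_dom by auto
  qed
  have GoG: "u \<in> domG \<and> G u = Go u" if u: "u \<in> domGo" for u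
  proof -
    define z where "z = Go u"
    have R: "cinner (adj domG G v) u = cinner v z" if v: "v \<in> adj_dom domG G" for v
    proof -
      have vD: "v \<in> domD" using v adjG_sub_D by auto
      have "cinner (D v) u = cinner v (adj domD D u)"
        using adj_prop[OF dD, of u D] u Go_dom vD by auto
      then have "cinner (- adj domG G v) u = cinner v (- z)"
        using adjG_sub_D' v Go_def u z_def by auto
      then show ?thesis by (simp add: cinner_minus_left cinner_minus_right)
    qed
    define C where "C = (\<lambda>x. (x - u, G x - z)) ` domG"
    have C_eq: "C = (+) (- (u, z)) ` {(x, G x) | x. x \<in> domG}"
      unfolding C_def by (auto simp: image_def)
    have Ccl: "closed C" unfolding C_eq
      by (rule closed_translation) (use G_closed in \<open>simp add: closed_op_def\<close>)
    have Cne: "C \<noteq> {}" using lin_op_zero[OF lG] by (auto simp: C_def)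
    have Cconv: "scaleR (1/2) (p + q) \<in> C" if "p \<in> C" "q \<in> C" for p q
    proof -
      obtain x1 where x1: "x1 \<in> domG" "p = (x1 - u, G x1 - z)" using \<open>p \<in> C\<close> by (auto simp: C_def)
      obtain x2 where x2: "x2 \<in> domG" "q = (x2 - u, G x2 - z)" using \<open>q \<in> C\<close> by (auto simp: C_def)
      have s: "x1 + x2 \<in> domG \<and> G (x1 + x2) = G x1 + G x2" by (rule lin_op_add[OF lG x1(1) x2(1)])
      have h: "scaleR (1/2) (x1 + x2) \<in> domG \<and> G (scaleR (1/2) (x1 + x2)) = scaleR (1/2) (G (x1 + x2))"
        by (rule lin_op_scaleR[OF lG s[THEN conjunct1]])
      have "scaleR (1/2) (p + q) = (scaleR (1/2) (x1 + x2) - u, G (scaleR (1/2) (x1 + x2)) - z)"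
        using x1 x2 h s by (simp add: algebra_simps scaleR_add_right[symmetric] del: scaleR_add_right)
      then show ?thesis using h by (auto simp: C_def)
    qed
    obtain c where cC: "c \<in> C" and cmin: "\<And>p. p \<in> C \<Longrightarrow> norm c \<le> norm p"
      using min_norm_exists[of C, OF parallelogram_prod Cne Ccl Cconv] by blast
    obtain x0 where x0: "x0 \<in> domG" "c = (x0 - u, G x0 - z)" using cC by (auto simp: C_def)
    have orth: "cinner (x0 - u) w + cinner (G x0 - z) (G w) = 0" if w: "w \<in> domG" for w
    proof (rule orth_from_min)
      fix t
      have a1: "scaleC t w \<in> domG \<and> G (scaleC t w) = scaleC t (G w)" by (rule lin_op_scaleC[OF lG w])
      have a2: "x0 + scaleC t w \<in> domG \<and> G (x0 + scaleC t w) = G x0 + G (scaleC t w)"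
        by (rule lin_op_add[OF lG x0(1) a1[THEN conjunct1]])
      have "(x0 + scaleC t w - u, G (x0 + scaleC t w) - z) \<in> C" using a2 by (auto simp: C_def)
      then have "norm c \<le> norm (x0 + scaleC t w - u, G (x0 + scaleC t w) - z)" by (rule cmin)
      then have "(norm c)^2 \<le> (norm (x0 + scaleC t w - u, G (x0 + scaleC t w) - z))^2"
        by (simp add: power_mono)
      moreover have "(x0 + scaleC t w - u, G (x0 + scaleC t w) - z) = (x0 - u + scaleC t w, G x0 - z + scaleC t (G w))"
        using a1 a2 by (simp add: algebra_simps)
      ultimately show "(norm (x0 - u))^2 + (norm (G x0 - z))^2
          \<le> (norm (x0 - u + scaleC t w))^2 + (norm (G x0 - z + scaleC t (G w)))^2"
        using x0(2) by (simp only: norm_Pair_sq)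
    qed
    define p where "p = G x0 - z"
    have "\<forall>w\<in>domG. cinner (G w) p = cinner w (u - x0)"
    proof
      fix w assume w: "w \<in> domG"
      have "cinner (G w) p = cnj (cinner p (G w))" by (rule cinner_commute)
      also have "cinner p (G w) = - cinner (x0 - u) w" using orth[OF w] by (simp add: p_def add_eq_0_iff)
      also have "cnj (- cinner (x0 - u) w) = - cinner w (x0 - u)" using cinner_commute[of w "x0 - u"] by simp
      also have "\<dots> = cinner w (u - x0)" by (simp add: cinner_minus_right[symmetric])
      finally show "cinner (G w) p = cinner w (u - x0)" .
    qed
    then have pa: "p \<in> adj_dom domG G \<and> adj domG G p = u - x0" by (rule adj_eqI[OF dG])
    have e1: "cinner (u - x0) u = cinner p z" using R[of p] pa by simp
    have "cinner (G x0) p = cinner x0 (u - x0)" using adj_prop[OF dG pa[THEN conjunct1]] x0(1) pa by auto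
    then have e2: "cinner (u - x0) x0 = cinner p (G x0)"
      using cinner_commute[of "u - x0" x0] cinner_commute[of p "G x0"] by simp
    have "cinner (u - x0) (u - x0) = cinner p (z - G x0)"
      using e1 e2 by (simp add: cinner_diff_right)
    also have "\<dots> = - cinner p p" by (simp add: p_def cinner_minus_right[symmetric])
    finally have "Re (cinner (u - x0) (u - x0)) = Re (- cinner p p)" by simp
    then have "(norm (u - x0))^2 = - ((norm p)^2)" by (simp add: norm_sq_cinner)
    then have "(norm (u - x0))^2 + (norm p)^2 = 0" by linarith
    then have "norm (u - x0) = 0" "norm p = 0" by (simp_all add: add_nonneg_eq_0_iff)
    then show ?thesis using x0(1) by (simp add: p_def z_def)
  qed
  define emb where "emb u = (u, Go u)" for u
  have emb_sq: "(norm (emb u))^2 = (norm u)^2 + (norm (Go u))^2" for u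
    by (simp add: emb_def norm_Pair_sq)
  have emb_diff: "emb (u - v) = emb u - emb v" if "u \<in> domGo" "v \<in> domGo" for u v
    using Go_diff[OF that] by (simp add: emb_def)
  have emb_scaleR: "emb (scaleR r u) = scaleR r (emb u)" if "u \<in> domGo" for u r
    using Go_scaleR[OF that] by (simp add: emb_def)
  have fst_emb: "fst (emb u) = u" for u by (simp add: emb_def)
  have Tin: "T u \<in> domGo" if "u \<in> domGo" for u using T_maps that by auto
  obtain mu where mu: "mu > 0" "\<And>x. Re (cinner (a x) x) \<ge> mu * (norm x)\<^sup>2" using a_coercive by blast
  have cla: "clinear a" using a_bdd by (simp add: bounded_clinear_def)
  have clm: "clinear m" using m_bdd by (simp add: bounded_clinear_def)
  obtain Mm0 where Mm0: "\<And>x. norm (m x) \<le> norm x * Mm0" using m_bdd by (auto simp: bounded_clinear_def)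
  define Mm where "Mm = max Mm0 0"
  have Mm1: "norm (m x) \<le> norm x * Mm" for x
  proof -
    have "norm x * Mm0 \<le> norm x * Mm" unfolding Mm_def by (intro mult_left_mono) auto
    then show ?thesis using Mm0[of x] by linarith
  qed
  have Mm: "norm (m x) \<le> norm x * Mm" "Mm \<ge> 0" for x using Mm1 by (auto simp: Mm_def)
  have a_add: "a (x + y) = a x + a y" for x y using cla by (simp add: clinear_def)
  have m_add: "m (x + y) = m x + m y" for x y using clm by (simp add: clinear_def)
  have a_scaleR: "a (scaleR r x) = scaleR r (a x)" for x r using cla by (simp add: clinear_def scaleR_scaleC)
  have m_scaleR: "m (scaleR r x) = scaleR r (m x)" for x r using clm by (simp add: clinear_def scaleR_scaleC)
  have TD: "cinner (T u) v + cinner (Go (T u)) (Go v) = cinner (a (Go u)) (Go v) + cinner (m u) v"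
    if "u \<in> domGo" "v \<in> domGo" for u v
    using T_def that GoG by auto
  have zero_if: "q = 0" if "q \<in> domGo" "cinner q q + cinner (Go q) (Go q) = 0" for q
  proof -
    have "Re (cinner q q + cinner (Go q) (Go q)) = 0" using that(2) by simp
    then have "(norm q)^2 + (norm (Go q))^2 = 0" by (simp add: norm_sq_cinner)
    then show ?thesis by (simp add: add_nonneg_eq_0_iff)
  qed
  have T_add: "T (u + w) = T u + T w" if u: "u \<in> domGo" and w: "w \<in> domGo" for u w
  proof -
    have uw: "u + w \<in> domGo" "Go (u + w) = Go u + Go w" using Go_add[OF u w] by auto
    define q where "q = T (u + w) - T u - T w"
    have q1: "T (u + w) - T u \<in> domGo" "Go (T (u + w) - T u) = Go (T (u+w)) - Go (T u)"
      using Go_diff[OF Tin[OF uw(1)] Tin[OF u]] by auto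
    have q: "q \<in> domGo" "Go q = Go (T (u + w)) - Go (T u) - Go (T w)"
      using Go_diff[OF q1(1) Tin[OF w]] q1(2) by (auto simp: q_def)
    have "cinner q q + cinner (Go q) (Go q) =
       (cinner (T (u + w)) q + cinner (Go (T (u + w))) (Go q))
       - (cinner (T u) q + cinner (Go (T u)) (Go q)) - (cinner (T w) q + cinner (Go (T w)) (Go q))"
      by (subst (1) q_def, subst q(2)) (simp add: cinner_diff_left)
    also have "\<dots> = 0"
      using TD[OF uw(1) q(1)] TD[OF u q(1)] TD[OF w q(1)] uw(2)
      by (simp add: a_add m_add cinner_add_left)
    finally show ?thesis using zero_if[OF q(1)] by (simp add: q_def diff_eq_eq add.commute)
  qed
  have T_scaleR: "T (scaleR r u) = scaleR r (T u)" if u: "u \<in> domGo" for u r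
  proof -
    have ru: "scaleR r u \<in> domGo" "Go (scaleR r u) = scaleR r (Go u)" using Go_scaleR[OF u] by auto
    have rt: "scaleR r (T u) \<in> domGo" "Go (scaleR r (T u)) = scaleR r (Go (T u))" using Go_scaleR[OF Tin[OF u]] by auto
    define q where "q = T (scaleR r u) - scaleR r (T u)"
    have q: "q \<in> domGo" "Go q = Go (T (scaleR r u)) - scaleR r (Go (T u))"
      using Go_diff[OF Tin[OF ru(1)] rt(1)] rt(2) by (auto simp: q_def)
    have "cinner q q + cinner (Go q) (Go q) =
       (cinner (T (scaleR r u)) q + cinner (Go (T (scaleR r u))) (Go q))
       - of_real r * (cinner (T u) q + cinner (Go (T u)) (Go q))"
      by (subst (1) q_def, subst q(2)) (simp add: cinner_diff_left cinner_scaleR_left algebra_simps)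
    also have "\<dots> = 0"
      using TD[OF ru(1) q(1)] TD[OF u q(1)] ru(2)
      by (simp add: a_scaleR m_scaleR cinner_scaleR_left algebra_simps)
    finally show ?thesis using zero_if[OF q(1)] by (simp add: q_def)
  qed
  have T_diff: "T (u - w) = T u - T w" if u: "u \<in> domGo" and w: "w \<in> domGo" for u w
  proof -
    have "u - w \<in> domGo" using Go_diff[OF u w] by auto
    then have "T (u - w + w) = T (u - w) + T w" using T_add w by blast
    then show ?thesis by simp
  qed
  obtain K0 where K0: "\<And>u. u \<in> domGo \<Longrightarrow> (norm (T u))\<^sup>2 + (norm (Go (T u)))\<^sup>2 \<le> K0 * ((norm u)\<^sup>2 + (norm (Go u))\<^sup>2)"
    using T_bdd by blast
  define Kp where "Kp = max K0 0"
  have Kp0: "Kp \<ge> 0" by (simp add: Kp_def)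
  have T_bound: "norm (emb (T u)) \<le> sqrt Kp * norm (emb u)" if u: "u \<in> domGo" for u
  proof -
    have "(norm (emb (T u)))^2 \<le> Kp * (norm (emb u))^2"
      using K0[OF u] unfolding emb_sq Kp_def
      by (smt (verit) mult_right_mono zero_le_power2 add_nonneg_nonneg)
    then have "sqrt ((norm (emb (T u)))^2) \<le> sqrt (Kp * (norm (emb u))^2)" by (rule real_sqrt_le_mono)
    then show ?thesis by (simp add: real_sqrt_mult)
  qed
  have T_cont: "(\<lambda>n. emb (T (X n))) \<longlonglongrightarrow> emb (T x)"
    if X: "\<And>n. X n \<in> domGo" "x \<in> domGo" "(\<lambda>n. emb (X n)) \<longlonglongrightarrow> emb x" for X x
  proof -
    have "(\<lambda>n. emb (T (X n)) - emb (T x)) \<longlonglongrightarrow> 0"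
    proof (rule Lim_null_comparison)
      show "\<forall>\<^sub>F n in sequentially. norm (emb (T (X n)) - emb (T x)) \<le> sqrt Kp * norm (emb (X n) - emb x)"
      proof (rule always_eventually, rule allI)
        fix n
        have "emb (T (X n)) - emb (T x) = emb (T (X n - x))"
          using emb_diff[OF Tin[OF X(1)] Tin[OF X(2)]] T_diff[OF X(1) X(2)] by simp
        moreover have "emb (X n) - emb x = emb (X n - x)" using emb_diff[OF X(1) X(2)] by simp
        moreover have "X n - x \<in> domGo" using Go_diff[OF X(1) X(2)] by simp
        ultimately show "norm (emb (T (X n)) - emb (T x)) \<le> sqrt Kp * norm (emb (X n) - emb x)"
          using T_bound by simp
      qed
      show "(\<lambda>n. sqrt Kp * norm (emb (X n) - emb x)) \<longlonglongrightarrow> 0"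
        by (intro tendsto_mult_right_zero tendsto_norm_zero LIM_zero X(3))
    qed
    then show ?thesis by (rule LIM_zero_cancel)
  qed
  have est: "mu * (norm (Go w))^2 \<le> norm (emb (T w)) * norm (emb w) + Mm * (norm w)^2"
    if w: "w \<in> domGo" for w
  proof -
    have "Re (cinner (T w) w + cinner (Go (T w)) (Go w)) = Re (cinner (a (Go w)) (Go w)) + Re (cinner (m w) w)"
      using TD[OF w w] by simp
    moreover have "Re (cinner (a (Go w)) (Go w)) \<ge> mu * (norm (Go w))^2" by (rule mu(2))
    moreover have "- Re (cinner (m w) w) \<le> Mm * (norm w)^2"
    proof -
      have "- Re (cinner (m w) w) \<le> cmod (cinner (m w) w)" using abs_Re_le_cmod[of "cinner (m w) w"] by linarith
      also have "\<dots> \<le> norm (m w) * norm w" by (rule cinner_cs)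
      also have "\<dots> \<le> norm w * Mm * norm w" by (intro mult_right_mono Mm(1)) simp
      finally show ?thesis by (simp add: power2_eq_square algebra_simps)
    qed
    moreover have "Re (cinner (T w) w + cinner (Go (T w)) (Go w)) \<le> norm (emb (T w)) * norm (emb w)"
    proof -
      have "Re (cinner (T w) w + cinner (Go (T w)) (Go w)) \<le> norm (T w) * norm w + norm (Go (T w)) * norm (Go w)"
        using Re_cinner_le[of "T w" w] Re_cinner_le[of "Go (T w)" "Go w"] by simp
      also have "\<dots> \<le> sqrt ((norm (T w))^2 + (norm (Go (T w)))^2) * sqrt ((norm w)^2 + (norm (Go w))^2)"
        by (rule real_cs2) auto
      also have "\<dots> = norm (emb (T w)) * norm (emb w)" by (simp add: emb_def norm_Pair)
      finally show ?thesis .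
    qed
    ultimately show ?thesis by linarith
  qed
  have CL: "x \<in> domGo \<and> (\<lambda>n. emb (X n)) \<longlonglongrightarrow> emb x"
    if X: "\<And>n. X n \<in> domGo" "\<And>n. norm (emb (X n)) \<le> B" "X \<longlonglongrightarrow> x" "Cauchy (\<lambda>n. emb (T (X n)))"
    for X x B
  proof -
    have B0: "B \<ge> 0" using X(2)[of 0] norm_ge_zero[of "emb (X 0)"] by linarith
    have CX: "Cauchy X" using X(3) by (rule LIMSEQ_imp_Cauchy)
    have "Cauchy (\<lambda>n. Go (X n))"
    proof (rule metric_CauchyI)
      fix eps :: real assume eps: "eps > 0"
      define d1 where "d1 = min 1 (mu * eps^2 / (2 * (Mm + 1)))"
      define d2 where "d2 = mu * eps^2 / (2 * (2*B + 1))"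
      have d1: "d1 > 0" using mu eps Mm(2) by (simp add: d1_def)
      have d2: "d2 > 0" using mu eps B0 by (simp add: d2_def)
      obtain N1 where N1: "\<And>m n. m \<ge> N1 \<Longrightarrow> n \<ge> N1 \<Longrightarrow> dist (X m) (X n) < d1"
        using metric_CauchyD[OF CX d1] by blast
      obtain N2 where N2: "\<And>m n. m \<ge> N2 \<Longrightarrow> n \<ge> N2 \<Longrightarrow> dist (emb (T (X m))) (emb (T (X n))) < d2"
        using metric_CauchyD[OF X(4) d2] by blast
      have "dist (Go (X m)) (Go (X n)) < eps" if mn: "m \<ge> max N1 N2" "n \<ge> max N1 N2" for m n
      proof -
        define W where "W = X m - X n"
        have W: "W \<in> domGo" "Go W = Go (X m) - Go (X n)" using Go_diff[OF X(1) X(1)] W_def by auto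
        have embW: "emb W = emb (X m) - emb (X n)" using emb_diff[OF X(1) X(1)] W_def by simp
        have TW: "emb (T W) = emb (T (X m)) - emb (T (X n))"
          using T_diff[OF X(1) X(1)] emb_diff[OF Tin[OF X(1)] Tin[OF X(1)]] W_def by simp
        have nW: "norm (emb W) \<le> 2*B"
          using embW norm_triangle_ineq4[of "emb (X m)" "emb (X n)"] X(2)[of m] X(2)[of n] by simp
        have w1: "norm W < d1" using N1[of m n] mn by (simp add: dist_norm W_def)
        have w2: "norm (emb (T W)) < d2" using N2[of m n] mn by (simp add: dist_norm TW)
        have t1: "norm (emb (T W)) * norm (emb W) \<le> d2 * (2*B)" using w2 nW d2 by (intro mult_mono) auto
        have t1': "d2 * (2*B) < mu * eps^2 / 2"
        proof -
          have "d2 * (2*B) = (mu*eps^2/2) * (2*B/(2*B+1))" using B0 by (simp add: d2_def field_simps)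
          moreover have "2*B/(2*B+1) < 1" using B0 by simp
          moreover have "mu*eps^2/2 > 0" using mu eps by simp
          ultimately have "(mu*eps^2/2) * (2*B/(2*B+1)) < (mu*eps^2/2) * 1"
            by (intro mult_strict_left_mono) auto
          then show ?thesis using \<open>d2 * (2*B) = (mu*eps^2/2) * (2*B/(2*B+1))\<close> by simp
        qed
        have t2: "Mm * (norm W)^2 \<le> mu * eps^2 / 2"
        proof -
          have "norm W * norm W \<le> norm W * 1" using w1 by (intro mult_left_mono) (auto simp: d1_def)
          then have "(norm W)^2 \<le> mu * eps^2 / (2 * (Mm + 1))" using w1 by (simp add: d1_def power2_eq_square)
          then have "Mm * (norm W)^2 \<le> Mm * (mu * eps^2 / (2 * (Mm + 1)))" using Mm(2) by (intro mult_left_mono) auto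
          also have "\<dots> = (mu * eps^2 / 2) * (Mm / (Mm + 1))" using Mm(2) by (simp add: field_simps)
          also have "\<dots> \<le> (mu * eps^2 / 2) * 1" using Mm(2) mu by (intro mult_left_mono) auto
          finally show ?thesis by simp
        qed
        have "mu * (norm (Go W))^2 < mu * eps^2" using est[OF W(1)] t1 t1' t2 by linarith
        then have "(norm (Go W))^2 < eps^2" using mu by simp
        then have "norm (Go W) < eps" using eps by (simp add: power_less_imp_less_base)
        then show ?thesis using W(2) by (simp add: dist_norm)
      qed
      then show "\<exists>M. \<forall>m\<ge>M. \<forall>n\<ge>M. dist (Go (X m)) (Go (X n)) < eps" by blast
    qed
    then obtain z where z: "(\<lambda>n. Go (X n)) \<longlonglongrightarrow> z" using Cauchy_convergent_iff convergent_def by blast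
    have xz: "x \<in> domGo \<and> Go x = z" by (rule Go_closed[OF X(1) X(3) z])
    have "(\<lambda>n. emb (X n)) \<longlonglongrightarrow> (x, z)" unfolding emb_def by (intro tendsto_Pair X(3) z)
    then show ?thesis using xz by (simp add: emb_def)
  qed
  have sc: "seq_compact (closure {u \<in> domGo. (norm u)\<^sup>2 + (norm (Go u))\<^sup>2 \<le> 1})"
    by (rule compact_imp_seq_compact[OF tau_compact])
  have subseq: "\<exists>l x. strict_mono l \<and> (X \<circ> l) \<longlonglongrightarrow> x"
    if X: "\<And>n. X n \<in> domGo" "\<And>n. norm (emb (X n)) \<le> 1" for X :: "nat \<Rightarrow> 'h0"
  proof -
    have mem: "X n \<in> closure {u \<in> domGo. (norm u)\<^sup>2 + (norm (Go u))\<^sup>2 \<le> 1}" for n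
    proof -
      have "(norm (emb (X n)))^2 \<le> 1" by (rule power_le_one[OF norm_ge_zero X(2)])
      then have "(norm (X n))^2 + (norm (Go (X n)))^2 \<le> 1" by (simp only: emb_sq)
      then have "X n \<in> {u \<in> domGo. (norm u)\<^sup>2 + (norm (Go u))\<^sup>2 \<le> 1}" using X(1)[of n] by blast
      then show ?thesis by (rule subsetD[OF closure_subset])
    qed
    from sc[unfolded seq_compact_def, rule_format, of X, OF mem]
    obtain x r where "strict_mono r" "(X \<circ> r) \<longlonglongrightarrow> x" by blast
    then show ?thesis by blast
  qed
  show ?thesis
  proof (intro allI impI)
    fix s y assume H: "(\<forall>n. s n \<in> T ` domGo) \<and> y \<in> domGo \<and> s \<longlonglongrightarrow> y \<and> (\<lambda>n. Go (s n)) \<longlonglongrightarrow> Go y"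
    have es: "(\<lambda>n. emb (s n)) \<longlonglongrightarrow> emb y" unfolding emb_def using H by (intro tendsto_Pair) auto
    have "Bseq (\<lambda>n. emb (s n))" using es by (intro convergent_imp_Bseq convergentI)
    then obtain Bs where Bs: "Bs > 0" "\<And>n. norm (emb (s n)) \<le> Bs" unfolding Bseq_def by blast
    have Cs: "Cauchy (\<lambda>n. emb (s n))" using es by (rule LIMSEQ_imp_Cauchy)
    have exv: "\<exists>v. v \<in> domGo \<and> T v = s n \<and> (\<forall>w. w \<in> domGo \<and> T w = s n \<longrightarrow> norm (emb v) \<le> norm (emb w) + 1)" for n
    proof -
      define P where "P = {v \<in> domGo. T v = s n}"
      have "s n \<in> T ` domGo" using H by blast
      then obtain v0 where "v0 \<in> domGo" "s n = T v0" by blast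
      then have Pne: "P \<noteq> {}" by (auto simp: P_def)
      define d where "d = Inf ((\<lambda>v. norm (emb v)) ` P)"
      have bdd: "bdd_below ((\<lambda>v. norm (emb v)) ` P)" by (rule bdd_belowI[of _ 0]) auto
      have "Inf ((\<lambda>v. norm (emb v)) ` P) < d + 1" by (simp add: d_def)
      then obtain v where v: "v \<in> P" "norm (emb v) < d + 1"
        using Pne by (subst (asm) cInf_less_iff[OF _ bdd]) auto
      have dl: "d \<le> norm (emb w)" if "w \<in> P" for w unfolding d_def using bdd that by (simp add: cInf_lower)
      have "\<forall>w. w \<in> domGo \<and> T w = s n \<longrightarrow> norm (emb v) \<le> norm (emb w) + 1"
      proof (intro allI impI)
        fix w assume "w \<in> domGo \<and> T w = s n"
        then have "d \<le> norm (emb w)" using dl by (auto simp: P_def)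
        then show "norm (emb v) \<le> norm (emb w) + 1" using v(2) by linarith
      qed
      then show ?thesis using v(1) by (auto simp: P_def)
    qed
    have "\<forall>n. \<exists>v. v \<in> domGo \<and> T v = s n \<and> (\<forall>w. w \<in> domGo \<and> T w = s n \<longrightarrow> norm (emb v) \<le> norm (emb w) + 1)"
      by (rule allI, rule exv)
    from choice[OF this] obtain u where u: "\<forall>n. u n \<in> domGo \<and> T (u n) = s n \<and> (\<forall>w. w \<in> domGo \<and> T w = s n \<longrightarrow> norm (emb (u n)) \<le> norm (emb w) + 1)" ..
    have uP: "\<And>n. u n \<in> domGo" "\<And>n. T (u n) = s n" using u by auto
    have umin: "\<And>n w. w \<in> domGo \<Longrightarrow> T w = s n \<Longrightarrow> norm (emb (u n)) \<le> norm (emb w) + 1"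
      using u by simp
    have "\<exists>B. \<forall>n. norm (emb (u n)) \<le> B"
    proof (rule ccontr)
      assume nb: "\<not> (\<exists>B. \<forall>n. norm (emb (u n)) \<le> B)"
      have exn: "\<exists>n. norm (emb (u n)) > real k + 1" for k
      proof -
        have "\<not> (\<forall>n. norm (emb (u n)) \<le> real k + 1)" using nb by blast
        then show ?thesis by (auto simp: not_le)
      qed
      have "\<forall>k. \<exists>n. norm (emb (u n)) > real k + 1" by (rule allI, rule exn)
      from choice[OF this] obtain nk where nk: "\<forall>k. norm (emb (u (nk k))) > real k + 1" ..
      define R where "R k = norm (emb (u (nk k)))" for k
      have R1: "R k > real k + 1" for k using nk by (simp add: R_def)
      have R: "R k > real k + 1" "R k > 0" for k using R1[of k] of_nat_0_le_iff[of k] by linarith+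
      define V where "V k = scaleR (1 / R k) (u (nk k))" for k
      have V: "V k \<in> domGo" for k using Go_scaleR[OF uP(1)] by (simp add: V_def)
      have embV: "emb (V k) = scaleR (1 / R k) (emb (u (nk k)))" for k
        using emb_scaleR[OF uP(1)] by (simp add: V_def)
      have nV: "norm (emb (V k)) = 1" for k using R(2)[of k] by (simp add: embV R_def)
      have TV: "emb (T (V k)) = scaleR (1 / R k) (emb (s (nk k)))" for k
        using T_scaleR[OF uP(1)] emb_scaleR[OF Tin[OF uP(1)]] uP(2) by (simp add: V_def)
      have TV0: "(\<lambda>k. emb (T (V k))) \<longlonglongrightarrow> 0"
      proof (rule Lim_null_comparison)
        show "\<forall>\<^sub>F k in sequentially. norm (emb (T (V k))) \<le> Bs * inverse (real (Suc k))"
        proof (rule always_eventually, rule allI)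
          fix k
          have "norm (emb (T (V k))) = norm (emb (s (nk k))) / R k" using R(2)[of k] by (simp add: TV)
          also have "\<dots> \<le> Bs / R k" using R(2)[of k] Bs(2) by (simp add: divide_right_mono)
          also have "\<dots> \<le> Bs / (real k + 1)" using R[of k] Bs(1) by (intro divide_left_mono) auto
          finally show "norm (emb (T (V k))) \<le> Bs * inverse (real (Suc k))" by (simp add: divide_inverse add.commute)
        qed
        show "(\<lambda>k. Bs * inverse (real (Suc k))) \<longlonglongrightarrow> 0"
          by (intro tendsto_mult_right_zero LIMSEQ_inverse_real_of_nat)
      qed
      obtain l v0 where l: "strict_mono l" "(V \<circ> l) \<longlonglongrightarrow> v0"
        using subseq[of V] V nV by auto
      have CT: "Cauchy (\<lambda>k. emb (T (V (l k))))"
        using LIMSEQ_imp_Cauchy[OF LIMSEQ_subseq_LIMSEQ[OF TV0 l(1)]] by (simp add: o_def)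
      have v0: "v0 \<in> domGo \<and> (\<lambda>k. emb (V (l k))) \<longlonglongrightarrow> emb v0"
        using CL[of "V \<circ> l" 1 v0] V nV l(2) CT by (simp add: o_def)
      have "(\<lambda>k. norm (emb (V (l k)))) \<longlonglongrightarrow> norm (emb v0)" using v0 by (intro tendsto_norm) auto
      then have nv0: "norm (emb v0) = 1" using nV by (simp add: LIMSEQ_const_iff)
      have "(\<lambda>k. emb (T (V (l k)))) \<longlonglongrightarrow> emb (T v0)" using v0 V by (intro T_cont) auto
      moreover have "(\<lambda>k. emb (T (V (l k)))) \<longlonglongrightarrow> 0" using LIMSEQ_subseq_LIMSEQ[OF TV0 l(1)] by (simp add: o_def)
      ultimately have "emb (T v0) = 0" by (rule LIMSEQ_unique)
      then have Tv0: "T v0 = 0" using fst_emb[of "T v0"] by simp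
      have key: "R k \<le> R k * norm (emb (V k) - emb v0) + 1" for k
      proof -
        have rv: "scaleR (R k) v0 \<in> domGo" using Go_scaleR v0 by auto
        define w where "w = u (nk k) - scaleR (R k) v0"
        have w: "w \<in> domGo" using Go_diff[OF uP(1) rv] by (simp add: w_def)
        have "T w = s (nk k)" using T_diff[OF uP(1) rv] T_scaleR[of v0] v0 Tv0 uP(2) by (simp add: w_def)
        then have "R k \<le> norm (emb w) + 1" using umin[OF w] by (simp add: R_def)
        moreover have "emb (u (nk k)) = scaleR (R k) (emb (V k))" using R(2)[of k] by (simp add: embV)
        then have "emb w = scaleR (R k) (emb (V k) - emb v0)"
          using emb_diff[OF uP(1) rv] emb_scaleR[of v0] v0 by (simp add: w_def scaleR_diff_right)
        then have "norm (emb w) = R k * norm (emb (V k) - emb v0)" using R(2)[of k] by simp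
        ultimately show ?thesis by simp
      qed
      obtain N where N: "\<forall>k\<ge>N. norm (emb (V (l k)) - emb v0) < 1/2"
        using LIMSEQ_D[OF v0[THEN conjunct2], of "1/2"] by auto
      define k where "k = max N 2"
      have "norm (emb (V (l k)) - emb v0) < 1/2" using N by (simp add: k_def)
      then have "R (l k) * norm (emb (V (l k)) - emb v0) \<le> R (l k) * (1/2)"
        using R(2)[of "l k"] by (intro mult_left_mono) auto
      then have "R (l k) \<le> 2" using key[of "l k"] by linarith
      moreover have "real (l k) \<ge> real k" using seq_suble[OF l(1)] by simp
      moreover have "real k \<ge> 2" by (simp add: k_def)
      ultimately show False using R(1)[of "l k"] by linarith
    qed
    then obtain B where B: "\<And>n. norm (emb (u n)) \<le> B" by blast
    define B' where "B' = max B 0 + 1"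
    have B'1: "norm (emb (u n)) \<le> B'" for n using B[of n] by (simp add: B'_def)
    have B': "B' > 0" "\<And>n. norm (emb (u n)) \<le> B'" using B'1 by (auto simp: B'_def)
    define W where "W n = scaleR (1 / B') (u n)" for n
    have Wd: "W n \<in> domGo" for n using Go_scaleR[OF uP(1)] by (simp add: W_def)
    have Wn: "norm (emb (W n)) \<le> 1" for n
      using emb_scaleR[OF uP(1), of "1/B'" n] B'(1) B'(2)[of n] by (simp add: W_def)
    obtain l w0 where l: "strict_mono l" "(W \<circ> l) \<longlonglongrightarrow> w0" using subseq[of W] Wd Wn by auto
    have ul: "(\<lambda>k. u (l k)) = (\<lambda>k. scaleR B' (W (l k)))" using B'(1) by (simp add: W_def)
    have ulim: "(\<lambda>k. u (l k)) \<longlonglongrightarrow> scaleR B' w0"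
      unfolding ul using l(2) by (intro tendsto_scaleR tendsto_const) (simp add: o_def)
    have CT: "Cauchy (\<lambda>k. emb (T (u (l k))))"
      using Cauchy_subseq_Cauchy[OF Cs l(1)] uP(2) by (simp add: o_def)
    have x0: "scaleR B' w0 \<in> domGo \<and> (\<lambda>k. emb (u (l k))) \<longlonglongrightarrow> emb (scaleR B' w0)"
      by (rule CL[of "\<lambda>k. u (l k)" B']) (use uP B' ulim CT in auto)
    have "(\<lambda>k. emb (T (u (l k)))) \<longlonglongrightarrow> emb (T (scaleR B' w0))" using x0 uP by (intro T_cont) auto
    moreover have "(\<lambda>k. emb (T (u (l k)))) \<longlonglongrightarrow> emb y"
      using LIMSEQ_subseq_LIMSEQ[OF es l(1)] uP(2) by (simp add: o_def)
    ultimately have "emb (T (scaleR B' w0)) = emb y" by (rule LIMSEQ_unique)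
    then have "fst (emb (T (scaleR B' w0))) = fst (emb y)" by simp
    then have "T (scaleR B' w0) = y" by (simp only: fst_emb)
    then show "y \<in> T ` domGo" using x0 by blast
  qed
qed

end
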